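(* Let ${\bf A}={\bf D}{\bf P}$ where ${\bf D}$ is an invertible diagonal $N\times N$ complex matrix and ${\bf P}$ is an $N\times N$ permutation matrix. If ${\bf A}$ is a linear automorphism of $L_{d,n}$, then ${\bf D}^2{\bf P}$ is a linear automorphism of $M_{d,n}$.
   Context: Let $d,n$ be positive integers, $N=\binom n2$, coordinates of $\mathbb C^N$ indexed by edges $\{i,j\}$ of $K_n$. For a complex configuration ${\bf p}$ of $n$ points in $\mathbb C^d$, $m({\bf p})$ has coordinates $m_{ij}=\sum_{k=1}^d({\bf p}_i^k-{\bf p}_j^k)^2$ (no conjugation); $M_{d,n}$ is the image of $m$; $L_{d,n}=s^{-1}(M_{d,n})$ where $s$ squares each coordinate. A linear automorphism of a variety $V\subset\mathbb C^N$ is a non-singular $N\times N$ complex matrix mapping $V$ bijectively onto itself. *)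

theory Defs
  imports "Jordan_Normal_Form.Determinant" "HOL-Combinatorics.Permutations"
begin

text \<open>Edges {i,j} (i<j<n) of the complete graph K_n, enumerated in a fixed order;
  coordinate k of C^N corresponds to the edge (edge_list n ! k).\<close>
definition edge_list :: "nat \<Rightarrow> (nat \<times> nat) list" where
  "edge_list n = concat (map (\<lambda>j. map (\<lambda>i. (i, j)) [0..<j]) [0..<n])"

definition Nn :: "nat \<Rightarrow> nat" where
  "Nn n = n choose 2"

text \<open>A configuration p: point i has coordinates p i k, k < d (entries outside are irrelevant).\<close>
definition mmap :: "nat \<Rightarrow> nat \<Rightarrow> (nat \<Rightarrow> nat \<Rightarrow> complex) \<Rightarrow> complex vec" where
  "mmap d n p = vec (Nn n) (\<lambda>k. case edge_list n ! k of (i, j) \<Rightarrow>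
        \<Sum>c<d. (p i c - p j c)^2)"

definition Mdn :: "nat \<Rightarrow> nat \<Rightarrow> complex vec set" where
  "Mdn d n = {mmap d n p | p. True}"

definition sq_map :: "complex vec \<Rightarrow> complex vec" where
  "sq_map x = map_vec (\<lambda>z. z^2) x"

definition Ldn :: "nat \<Rightarrow> nat \<Rightarrow> complex vec set" where
  "Ldn d n = {x \<in> carrier_vec (Nn n). sq_map x \<in> Mdn d n}"

definition linear_automorphism :: "nat \<Rightarrow> complex mat \<Rightarrow> complex vec set \<Rightarrow> bool" where
  "linear_automorphism N A V \<longleftrightarrow> A \<in> carrier_mat N N \<and> det A \<noteq> 0 \<and>
     bij_betw (\<lambda>x. A *\<^sub>v x) V V"

definition permutation_matrix :: "nat \<Rightarrow> complex mat \<Rightarrow> bool" where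
  "permutation_matrix N P \<longleftrightarrow> (\<exists>\<sigma>. \<sigma> permutes {..<N} \<and>
     P = mat N N (\<lambda>(i, j). if \<sigma> i = j then 1 else 0))"

end

theory Submission
  imports Defs
begin

lemma diag_mult_vec:
  fixes D :: "complex mat"
  assumes "D \<in> carrier_mat N N" "diagonal_mat D" "y \<in> carrier_vec N"
  shows "D *\<^sub>v y = vec N (\<lambda>i. D $$ (i,i) * y $ i)"
proof (rule eq_vecI)
  fix i assume i: "i < dim_vec (vec N (\<lambda>i. D $$ (i,i) * y $ i))"
  hence iN: "i < N" by simp
  have "(D *\<^sub>v y) $ i = (\<Sum>j\<in>{0..<N}. D $$ (i,j) * y $ j)"
    using assms iN by (simp add: scalar_prod_def)
  also have "\<dots> = (\<Sum>j\<in>{0..<N}. if j = i then D $$ (i,i) * y $ i else 0)"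
    apply (rule sum.cong) using assms iN unfolding diagonal_mat_def by auto
  also have "\<dots> = D $$ (i,i) * y $ i" using iN by simp
  finally show "(D *\<^sub>v y) $ i = vec N (\<lambda>i. D $$ (i,i) * y $ i) $ i" using iN by simp
qed (use assms in simp)

lemma perm_mult_vec:
  fixes x :: "complex vec"
  assumes "\<sigma> permutes {..<N}" "x \<in> carrier_vec N"
  shows "mat N N (\<lambda>(i, j). if \<sigma> i = j then 1 else 0) *\<^sub>v x = vec N (\<lambda>i. x $ \<sigma> i)"
proof (rule eq_vecI)
  fix i assume "i < dim_vec (vec N (\<lambda>i. x $ \<sigma> i))"
  hence iN: "i < N" by simp
  have si: "\<sigma> i < N" using assms(1) iN by (meson lessThan_iff permutes_in_image)
  have "(mat N N (\<lambda>(i, j). if \<sigma> i = j then 1 else 0) *\<^sub>v x) $ i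
      = (\<Sum>j\<in>{0..<N}. (if \<sigma> i = j then 1 else 0) * x $ j)"
    using assms iN by (simp add: scalar_prod_def)
  also have "\<dots> = (\<Sum>j\<in>{0..<N}. if j = \<sigma> i then x $ \<sigma> i else 0)"
    by (rule sum.cong) auto
  also have "\<dots> = x $ \<sigma> i" using si by simp
  finally show "(mat N N (\<lambda>(i, j). if \<sigma> i = j then 1 else 0) *\<^sub>v x) $ i = vec N (\<lambda>i. x $ \<sigma> i) $ i"
    using iN by simp
qed simp

theorem lemma5p6:
  fixes d n :: nat and D P :: "complex mat"
  assumes "0 < d" and "0 < n"
    and "D \<in> carrier_mat (Nn n) (Nn n)" and "diagonal_mat D" and "det D \<noteq> 0"
    and "permutation_matrix (Nn n) P"
    and "linear_automorphism (Nn n) (D * P) (Ldn d n)"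
  shows "linear_automorphism (Nn n) (D * D * P) (Mdn d n)"
proof -
  define N where "N = Nn n"
  obtain \<sigma> where sig: "\<sigma> permutes {..<N}" and Pdef: "P = mat N N (\<lambda>(i, j). if \<sigma> i = j then 1 else 0)"
    using assms(6) unfolding permutation_matrix_def N_def by blast
  define f where "f i = D $$ (i,i)" for i
  have Dc: "D \<in> carrier_mat N N" using assms(3) N_def by simp
  have Pc: "P \<in> carrier_mat N N" using Pdef by simp
  have hA: "(D * P) *\<^sub>v x = vec N (\<lambda>i. f i * x $ \<sigma> i)" if "x \<in> carrier_vec N" for x
  proof -
    have "(D * P) *\<^sub>v x = D *\<^sub>v (P *\<^sub>v x)" using Dc Pc that by simp
    also have "P *\<^sub>v x = vec N (\<lambda>i. x $ \<sigma> i)" using perm_mult_vec[OF sig that] Pdef by simp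
    finally show ?thesis using diag_mult_vec[OF Dc assms(4)] f_def
      by (intro eq_vecI) auto
  qed
  have hA2: "(D * D * P) *\<^sub>v x = vec N (\<lambda>i. f i * (f i * x $ \<sigma> i))" if "x \<in> carrier_vec N" for x
  proof -
    have "(D * D * P) *\<^sub>v x = D *\<^sub>v ((D * P) *\<^sub>v x)"
      using assoc_mult_mat_vec[OF Dc mult_carrier_mat[OF Dc Pc] that] by (simp add: assoc_mult_mat[OF Dc Dc Pc])
    also have "\<dots> = vec N (\<lambda>i. f i * (f i * x $ \<sigma> i))"
      using hA[OF that] diag_mult_vec[OF Dc assms(4)] f_def by (intro eq_vecI) auto
    finally show ?thesis .
  qed
  have comm: "sq_map ((D * P) *\<^sub>v x) = (D * D * P) *\<^sub>v (sq_map x)" if "x \<in> carrier_vec N" for x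
  proof -
    have sc: "sq_map x \<in> carrier_vec N" using that unfolding sq_map_def by simp
    have si: "\<And>i. i < N \<Longrightarrow> \<sigma> i < N" using sig by (meson lessThan_iff permutes_in_image)
    show ?thesis unfolding hA[OF that] hA2[OF sc]
      by (rule eq_vecI) (use that si in \<open>auto simp: sq_map_def power2_eq_square\<close>)
  qed
  have Mc: "Mdn d n \<subseteq> carrier_vec N" unfolding Mdn_def mmap_def N_def by auto
  have sL: "sq_map ` Ldn d n = Mdn d n"
  proof
    show "sq_map ` Ldn d n \<subseteq> Mdn d n" unfolding Ldn_def by auto
  next
    show "Mdn d n \<subseteq> sq_map ` Ldn d n"
    proof
      fix y assume y: "y \<in> Mdn d n"
      hence yc: "y \<in> carrier_vec N" using Mc by auto
      define x where "x = map_vec csqrt y"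
      have "sq_map x = y" unfolding x_def sq_map_def
        by (rule eq_vecI) (use yc in auto)
      moreover have "x \<in> carrier_vec N" using yc x_def by simp
      ultimately show "y \<in> sq_map ` Ldn d n" using y unfolding Ldn_def N_def by auto
    qed
  qed
  have bijA: "bij_betw (\<lambda>x. (D * P) *\<^sub>v x) (Ldn d n) (Ldn d n)"
    using assms(7) unfolding linear_automorphism_def by simp
  have Lc: "Ldn d n \<subseteq> carrier_vec N" unfolding Ldn_def N_def by auto
  have img: "(\<lambda>x. (D * D * P) *\<^sub>v x) ` Mdn d n = Mdn d n"
  proof -
    have "(\<lambda>x. (D * D * P) *\<^sub>v x) ` Mdn d n = (\<lambda>x. (D * D * P) *\<^sub>v x) ` sq_map ` Ldn d n"
      using sL by simp
    also have "\<dots> = sq_map ` (\<lambda>x. (D * P) *\<^sub>v x) ` Ldn d n"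
      unfolding image_image using comm Lc by (intro image_cong) auto
    also have "\<dots> = sq_map ` Ldn d n" using bijA by (simp add: bij_betw_def)
    finally show ?thesis using sL by simp
  qed
  have fnz: "f i \<noteq> 0" if "i < N" for i
  proof -
    have ut: "upper_triangular D" using assms(4) Dc unfolding diagonal_mat_def upper_triangular_def by auto
    have "det D = prod_list (diag_mat D)" using det_upper_triangular[OF ut Dc] .
    hence "0 \<notin> set (diag_mat D)" using assms(5) by (simp add: prod_list_zero_iff)
    thus ?thesis using that Dc unfolding diag_mat_def f_def by auto
  qed
  have inj: "inj_on (\<lambda>x. (D * D * P) *\<^sub>v x) (Mdn d n)"
  proof
    fix x y assume x: "x \<in> Mdn d n" and y: "y \<in> Mdn d n"
      and eq: "(D * D * P) *\<^sub>v x = (D * D * P) *\<^sub>v y"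
    have xc: "x \<in> carrier_vec N" and yc: "y \<in> carrier_vec N" using x y Mc by auto
    have e: "x $ \<sigma> i = y $ \<sigma> i" if "i < N" for i
    proof -
      have "vec N (\<lambda>i. f i * (f i * x $ \<sigma> i)) $ i = vec N (\<lambda>i. f i * (f i * y $ \<sigma> i)) $ i"
        using eq hA2[OF xc] hA2[OF yc] by simp
      thus ?thesis using that fnz[OF that] by simp
    qed
    show "x = y"
    proof (rule eq_vecI)
      fix j assume "j < dim_vec y"
      hence j: "j < N" using yc by simp
      have "Hilbert_Choice.inv \<sigma> j < N" using j sig by (meson lessThan_iff permutes_in_image permutes_inv)
      moreover have "\<sigma> (Hilbert_Choice.inv \<sigma> j) = j" using sig by (meson permutes_inverses(1))
      ultimately show "x $ j = y $ j" using e by metis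
    qed (use xc yc in simp)
  qed
  have det: "det (D * D * P) \<noteq> 0"
  proof -
    have "det (D * D * P) = det D * det (D * P)"
      using assoc_mult_mat[OF Dc Dc Pc] det_mult[OF Dc mult_carrier_mat[OF Dc Pc]] by simp
    thus ?thesis using assms(5,7) unfolding linear_automorphism_def by simp
  qed
  show ?thesis unfolding linear_automorphism_def bij_betw_def
    using inj img det Dc Pc N_def by auto
qed

end
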